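(* Assume Case 2 holds and $d=0$. Then $\delta>d$, and with $\mathcal{I}_f=[l_1,\alpha]$ we have $w_l(Q^n)=\gamma_n=\gamma\delta^{n-1}$ for every $n\ge1$ and every $l\in\mathcal{I}_f$. Moreover, if $\delta=T_{s-1}$ then $\mathcal{I}_f=\{l_1\}$ and $w_{l_1}(Q^n)=\gamma_n$ for all $n\ge1$.
   Context: Let $f(z,w)=(p(z),q(z,w))$ be a holomorphic skew product germ at the origin of $\mathbb{C}^2$ with $f(0,0)=(0,0)$, where $p(z)=a_\delta z^\delta+O(z^{\delta+1})$ with $a_\delta\neq0$ and integer $\delta\ge1$, and $q(z,w)=\sum_{i+j\ge1}b_{ij}z^iw^j$ is not identically zero. For $n\ge1$ write $f^n=(p^n,Q^n)$. For a nonzero germ $g=\sum g_{ij}z^iw^j$ and real $l>0$ let $w_l(g)=\min\{i+lj: g_{ij}\neq0\}$. The Newton polygon $N(g)$ is the convex hull of $\bigcup_{g_{ij}\neq0}\{(x,y):x\ge i,\ y\ge j\}$. Let $(n_1,m_1),\dots,(n_s,m_s)$ be the vertices of $N(q)$ with $n_1<\cdots<n_s$, $m_1>\cdots>m_s$; for $1\le k\le s-1$ let $T_k$ be the $y$-intercept of the line through $(n_k,m_k)$ and $(n_{k+1},m_{k+1})$. Case 2 means: $s>1$ and $\delta\le T_{s-1}$; set $(\gamma,d)=(n_s,m_s)$ and $l_1=\frac{n_s-n_{s-1}}{m_{s-1}-m_s}$. Define $\gamma_n=\gamma(\delta^{n-1}+\delta^{n-2}d+\cdots+d^{n-1})$ (with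 $0^0=1$, so $\gamma_n=\gamma\delta^{n-1}$ when $d=0$) and $\alpha=\gamma/(\delta-d)$. *)

theory Defs
  imports "HOL-Analysis.Analysis"
begin

text \<open>Bivariate formal power series in z (first index) and w (second index),
  represented by their coefficient functions.  A germ sum g_ij z^i w^j is g.\<close>

type_synonym bser = "nat \<Rightarrow> nat \<Rightarrow> complex"

definition bone :: bser where
  "bone = (\<lambda>i j. if i = 0 \<and> j = 0 then 1 else 0)"

definition bZ :: bser where
  "bZ = (\<lambda>i j. if i = 1 \<and> j = 0 then 1 else 0)"

definition bW :: bser where
  "bW = (\<lambda>i j. if i = 0 \<and> j = 1 then 1 else 0)"

definition bmult :: "bser \<Rightarrow> bser \<Rightarrow> bser" where
  "bmult F G = (\<lambda>i j. \<Sum>a\<le>i. \<Sum>b\<le>j. F a b * G (i - a) (j - b))"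

fun bpow :: "bser \<Rightarrow> nat \<Rightarrow> bser" where
  "bpow F 0 = bone"
| "bpow F (Suc k) = bmult F (bpow F k)"

text \<open>Formal substitution g(P, R) for series P, R without constant term:
  the coefficient of z^i w^j only involves the terms g_uv P^u R^v with u+v \<le> i+j.\<close>
definition bsubst :: "bser \<Rightarrow> bser \<Rightarrow> bser \<Rightarrow> bser" where
  "bsubst g P R = (\<lambda>i j. \<Sum>u\<le>i+j. \<Sum>v\<le>i+j. g u v * bmult (bpow P u) (bpow R v) i j)"

definition zser :: "(nat \<Rightarrow> complex) \<Rightarrow> bser" where
  "zser a = (\<lambda>i j. if j = 0 then a i else 0)"

text \<open>Iterates f^n = (p^n, Q^n) of the skew product f(z,w) = (p(z), q(z,w)),
  via f^(n+1) = f \<circ> f^n.\<close>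
fun skew_iter :: "(nat \<Rightarrow> complex) \<Rightarrow> bser \<Rightarrow> nat \<Rightarrow> bser \<times> bser" where
  "skew_iter a q 0 = (bZ, bW)"
| "skew_iter a q (Suc n) =
     (let (P, R) = skew_iter a q n in (bsubst (zser a) P R, bsubst q P R))"

definition Qit :: "(nat \<Rightarrow> complex) \<Rightarrow> bser \<Rightarrow> nat \<Rightarrow> bser" where
  "Qit a q n = snd (skew_iter a q n)"

definition wl :: "real \<Rightarrow> bser \<Rightarrow> real" where
  "wl l g = Inf {real i + l * real j | i j. g i j \<noteq> 0}"

definition newton_polygon :: "bser \<Rightarrow> (real \<times> real) set" where
  "newton_polygon g = convex hull (\<Union>{ {(x, y). x \<ge> real i \<and> y \<ge> real j} | i j. g i j \<noteq> 0})"

definition y_intercept :: "real \<Rightarrow> real \<Rightarrow> real \<Rightarrow> real \<Rightarrow> real" where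
  "y_intercept n1 m1 n2 m2 = m1 - n1 * (m2 - m1) / (n2 - n1)"

definition gamma_n :: "nat \<Rightarrow> nat \<Rightarrow> nat \<Rightarrow> nat \<Rightarrow> nat" where
  "gamma_n \<gamma> \<delta> d n = \<gamma> * (\<Sum>k<n. \<delta> ^ (n - 1 - k) * d ^ k)"

end

theory Submission
  imports Defs
begin

definition wt :: "real \<Rightarrow> nat \<Rightarrow> nat \<Rightarrow> real" where "wt l i j = real i + l * real j"
definition mle :: "real \<Rightarrow> nat\<times>nat \<Rightarrow> nat\<times>nat \<Rightarrow> bool" where
 "mle l x y \<longleftrightarrow> wt l (fst x) (snd x) < wt l (fst y) (snd y) \<or>
    (wt l (fst x) (snd x) = wt l (fst y) (snd y) \<and> snd y \<le> snd x)"
definition lead :: "real \<Rightarrow> bser \<Rightarrow> nat\<times>nat \<Rightarrow> bool" where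
 "lead l F p \<longleftrightarrow> F (fst p) (snd p) \<noteq> 0 \<and> (\<forall>i j. F i j \<noteq> 0 \<longrightarrow> mle l p (i,j))"
definition padd :: "nat\<times>nat \<Rightarrow> nat\<times>nat \<Rightarrow> nat\<times>nat" where
 "padd p r = (fst p + fst r, snd p + snd r)"
definition psc :: "nat \<Rightarrow> nat\<times>nat \<Rightarrow> nat\<times>nat" where
 "psc k p = (k * fst p, k * snd p)"

lemma mle_refl: "mle l x x" by (simp add: mle_def)
lemma mle_trans: "mle l x y \<Longrightarrow> mle l y z \<Longrightarrow> mle l x z"
  unfolding mle_def by auto
lemma mle_antisym: "mle l x y \<Longrightarrow> mle l y x \<Longrightarrow> x = y"
  unfolding mle_def wt_def by (cases x; cases y) auto
lemma mle_add: "mle l p x \<Longrightarrow> mle l r y \<Longrightarrow> mle l (padd p r) (padd x y)"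
  unfolding mle_def wt_def padd_def by (auto simp: algebra_simps)
lemma mle_add_eq:
  assumes "mle l p x" "mle l r y" "padd x y = padd p r" shows "x = p \<and> y = r"
proof -
  obtain x1 x2 y1 y2 p1 p2 r1 r2 where e: "x = (x1,x2)" "y = (y1,y2)" "p = (p1,p2)" "r = (r1,r2)"
    by (cases x; cases y; cases p; cases r) auto
  have s1: "real x1 + real y1 = real p1 + real r1" "x2 + y2 = p2 + r2"
    using assms(3) e by (auto simp: padd_def simp flip: of_nat_add)
  have s2: "real x2 + real y2 = real p2 + real r2" using s1(2) by (simp flip: of_nat_add)
  have m: "wt l p1 p2 \<le> wt l x1 x2" "wt l r1 r2 \<le> wt l y1 y2"
    using assms(1,2) e by (auto simp: mle_def)
  have we: "wt l p1 p2 + wt l r1 r2 = wt l x1 x2 + wt l y1 y2"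
  proof -
    have "wt l x1 x2 + wt l y1 y2 = (real x1 + real y1) + l * (real x2 + real y2)" by (simp add: wt_def algebra_simps)
    moreover have "wt l p1 p2 + wt l r1 r2 = (real p1 + real r1) + l * (real p2 + real r2)" by (simp add: wt_def algebra_simps)
    ultimately show ?thesis using s1(1) s2 by simp
  qed
  have w1: "wt l p1 p2 = wt l x1 x2" "wt l r1 r2 = wt l y1 y2" using m we by linarith+
  have "x2 \<le> p2" "y2 \<le> r2" using assms(1,2) e w1 by (auto simp: mle_def)
  then have "x2 = p2" "y2 = r2" using s1(2) by linarith+
  then have "x1 = p1" "y1 = r1" using w1 by (auto simp: wt_def)
  then show ?thesis using e \<open>x2 = p2\<close> \<open>y2 = r2\<close> by auto
qed

lemma sum_single: "finite A \<Longrightarrow> x \<in> A \<Longrightarrow> (\<And>y. y \<in> A \<Longrightarrow> y \<noteq> x \<Longrightarrow> g y = 0) \<Longrightarrow> sum g A = g x"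
proof -
  assume "finite A" "x \<in> A" "\<And>y. y \<in> A \<Longrightarrow> y \<noteq> x \<Longrightarrow> g y = 0"
  then have "sum g A = sum g {x}" by (intro sum.mono_neutral_right) auto
  then show ?thesis by simp
qed

lemma sum_nz: "sum g A \<noteq> 0 \<Longrightarrow> \<exists>x\<in>A. g x \<noteq> 0"
  by (meson sum.neutral)

lemma lead_bmult:
  assumes F: "lead l F p" and G: "lead l G r"
  shows "lead l (bmult F G) (padd p r)"
proof -
  obtain a0 b0 where p: "p = (a0,b0)" by (cases p)
  obtain c0 d0 where r: "r = (c0,d0)" by (cases r)
  have F0: "F a0 b0 \<noteq> 0" and Fm: "\<And>i j. F i j \<noteq> 0 \<Longrightarrow> mle l p (i,j)"
    using F p by (auto simp: lead_def)
  have G0: "G c0 d0 \<noteq> 0" and Gm: "\<And>i j. G i j \<noteq> 0 \<Longrightarrow> mle l r (i,j)"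
    using G r by (auto simp: lead_def)
  have key: "mle l (padd p r) (i,j) \<and> ((i,j) = padd p r \<longrightarrow> (a,b) = p)"
    if "F a b \<noteq> 0" "G (i-a) (j-b) \<noteq> 0" "a \<le> i" "b \<le> j" for a b i j
  proof -
    have e: "padd (a,b) (i-a,j-b) = (i,j)" using that by (simp add: padd_def)
    have m1: "mle l p (a,b)" using Fm that by blast
    have m2: "mle l r (i-a,j-b)" using Gm that by blast
    show ?thesis using mle_add[OF m1 m2] mle_add_eq[OF m1 m2] e by auto
  qed
  have coef: "bmult F G (a0+c0) (b0+d0) = F a0 b0 * G c0 d0"
  proof -
    have inner: "(\<Sum>b\<le>b0+d0. F a b * G (a0+c0 - a) (b0+d0 - b)) =
       (if a = a0 then F a0 b0 * G c0 d0 else 0)" if "a \<le> a0+c0" for a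
    proof -
      have "(\<Sum>b\<le>b0+d0. F a b * G (a0+c0 - a) (b0+d0 - b)) = 
             (if a = a0 then F a b0 * G (a0+c0 - a) (b0+d0 - b0) else 0)"
      proof (cases "a = a0")
        case True
        have "(\<Sum>b\<le>b0+d0. F a b * G (a0+c0 - a) (b0+d0 - b)) = F a b0 * G (a0+c0 - a) (b0+d0 - b0)"
          apply (rule sum_single)
          using key[of a _ "a0+c0" "b0+d0"] that p r True by (auto simp: padd_def)
        then show ?thesis using True by simp
      next
        case False
        then show ?thesis
          using key[of a _ "a0+c0" "b0+d0"] that p r by (auto simp: padd_def intro!: sum.neutral) blast
      qed
      then show ?thesis by simp
    qed
    have "bmult F G (a0+c0) (b0+d0) = (\<Sum>a\<le>a0+c0. (if a = a0 then F a0 b0 * G c0 d0 else 0))"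
      unfolding bmult_def using inner by (intro sum.cong) auto
    also have "\<dots> = F a0 b0 * G c0 d0" by (subst sum.delta) auto
    finally show ?thesis .
  qed
  have nz: "bmult F G (fst (padd p r)) (snd (padd p r)) \<noteq> 0"
    using coef F0 G0 p r by (simp add: padd_def)
  have "mle l (padd p r) (i,j)" if "bmult F G i j \<noteq> 0" for i j
  proof -
    have "(\<Sum>a\<le>i. \<Sum>b\<le>j. F a b * G (i - a) (j - b)) \<noteq> 0" using that by (simp add: bmult_def)
    then obtain a where a: "a \<le> i" "(\<Sum>b\<le>j. F a b * G (i - a) (j - b)) \<noteq> 0"
      using sum_nz by fastforce
    then obtain b where b: "b \<le> j" "F a b * G (i - a) (j - b) \<noteq> 0"
      using sum_nz by fastforce
    then show ?thesis using key[of a b i j] a by auto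
  qed
  then show ?thesis using nz by (simp add: lead_def)
qed

lemma lead_bone: "lead l bone (0,0)"
  by (simp add: lead_def bone_def mle_def)

lemma lead_bpow: "lead l F p \<Longrightarrow> lead l (bpow F k) (psc k p)"
proof (induction k)
  case 0 then show ?case using lead_bone by (simp add: psc_def)
next
  case (Suc k)
  have "psc (Suc k) p = padd p (psc k p)" by (simp add: psc_def padd_def)
  then show ?case using lead_bmult[OF Suc.prems Suc.IH[OF Suc.prems]] by simp
qed

lemma lead_subst:
  assumes P: "lead l P p" and R: "lead l R r" and p1: "1 \<le> fst p + snd p" and r1: "1 \<le> fst r + snd r"
  and g0: "g u0 v0 \<noteq> 0"
  and gm: "\<And>u v. g u v \<noteq> 0 \<Longrightarrow> (u,v) \<noteq> (u0,v0) \<Longrightarrow>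
     mle l (padd (psc u0 p) (psc v0 r)) (padd (psc u p) (psc v r)) \<and>
     padd (psc u p) (psc v r) \<noteq> padd (psc u0 p) (psc v0 r)"
  shows "lead l (bsubst g P R) (padd (psc u0 p) (psc v0 r))"
proof -
  define M where "M = padd (psc u0 p) (psc v0 r)"
  define T where "T u v = bmult (bpow P u) (bpow R v)" for u v
  have TL: "lead l (T u v) (padd (psc u p) (psc v r))" for u v
    unfolding T_def by (intro lead_bmult lead_bpow P R)
  obtain i0 j0 where M: "M = (i0,j0)" by (cases M)
  have "i0 + j0 = u0 * (fst p + snd p) + v0 * (fst r + snd r)"
    using M unfolding M_def padd_def psc_def by (simp add: algebra_simps)
  moreover have "u0 \<le> u0 * (fst p + snd p)" "v0 \<le> v0 * (fst r + snd r)" using p1 r1 by simp_all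
  ultimately have u0N: "u0 \<le> i0 + j0" and v0N: "v0 \<le> i0 + j0" by linarith+
  have Z: "g u v * T u v i0 j0 = 0" if "(u,v) \<noteq> (u0,v0)" for u v
  proof (rule ccontr)
    assume "g u v * T u v i0 j0 \<noteq> 0"
    then have gg: "g u v \<noteq> 0" and tt: "T u v i0 j0 \<noteq> 0" by auto
    have "mle l (padd (psc u p) (psc v r)) M" using TL[of u v] tt M by (auto simp: lead_def)
    moreover have "mle l M (padd (psc u p) (psc v r))" "padd (psc u p) (psc v r) \<noteq> M"
      using gm[OF gg that] M_def by auto
    ultimately show False using mle_antisym by blast
  qed
  have coef: "bsubst g P R i0 j0 = g u0 v0 * T u0 v0 i0 j0"
  proof -
    have "bsubst g P R i0 j0 = (\<Sum>u\<le>i0+j0. \<Sum>v\<le>i0+j0. g u v * T u v i0 j0)"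
      by (simp add: bsubst_def T_def)
    also have "\<dots> = (\<Sum>v\<le>i0+j0. g u0 v * T u0 v i0 j0)"
      apply (rule sum_single) using u0N Z by (auto intro!: sum.neutral)
    also have "\<dots> = g u0 v0 * T u0 v0 i0 j0"
      apply (rule sum_single) using v0N Z by auto
    finally show ?thesis .
  qed
  have nz: "bsubst g P R i0 j0 \<noteq> 0" using coef g0 TL[of u0 v0] M M_def by (simp add: lead_def)
  have "mle l M (i,j)" if "bsubst g P R i j \<noteq> 0" for i j
  proof -
    have "(\<Sum>u\<le>i+j. \<Sum>v\<le>i+j. g u v * T u v i j) \<noteq> 0" using that by (simp add: bsubst_def T_def)
    then obtain u where "(\<Sum>v\<le>i+j. g u v * T u v i j) \<noteq> 0" using sum_nz by fastforce
    then obtain v where "g u v * T u v i j \<noteq> 0" using sum_nz by fastforce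
    then have gg: "g u v \<noteq> 0" and tt: "T u v i j \<noteq> 0" by auto
    have m1: "mle l (padd (psc u p) (psc v r)) (i,j)" using TL[of u v] tt by (auto simp: lead_def)
    show ?thesis
    proof (cases "(u,v) = (u0,v0)")
      case True then show ?thesis using m1 M_def by auto
    next
      case False then show ?thesis using gm[OF gg False] m1 mle_trans M_def by blast
    qed
  qed
  then show ?thesis using nz M by (simp add: lead_def M_def[symmetric])
qed

lemma lead_exists:
  assumes l: "l > 0" and F: "F i0 j0 \<noteq> 0" shows "\<exists>p. lead l F p"
proof -
  define w0 where "w0 = wt l i0 j0"
  define S where "S = {(i,j). F i j \<noteq> 0 \<and> wt l i j \<le> w0}"
  define K where "K = nat \<lceil>w0\<rceil> + nat \<lceil>w0 / l\<rceil>"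
  have "S \<subseteq> {..K} \<times> {..K}"
  proof
    fix x assume "x \<in> S"
    then obtain i j where x: "x = (i,j)" "wt l i j \<le> w0" using S_def by auto
    have "real i \<le> w0" "l * real j \<le> w0" using x l by (auto simp: wt_def)
      (smt (verit) mult_nonneg_nonneg of_nat_0_le_iff)+
    then have "real j \<le> w0 / l" using l by (simp add: field_simps)
    then have "i \<le> K" "j \<le> K" using \<open>real i \<le> w0\<close> unfolding K_def by linarith+
    then show "x \<in> {..K} \<times> {..K}" using x by auto
  qed
  then have finS: "finite S" by (rule finite_subset) auto
  have inS: "(i0,j0) \<in> S" using F by (simp add: S_def w0_def)
  define W where "W = Min ((\<lambda>x. wt l (fst x) (snd x)) ` S)"
  define T where "T = {x\<in>S. wt l (fst x) (snd x) = W}"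
  have W1: "W \<in> (\<lambda>x. wt l (fst x) (snd x)) ` S" unfolding W_def using finS inS by (intro Min_in) auto
  have W2: "W \<le> wt l (fst x) (snd x)" if "x \<in> S" for x unfolding W_def using finS that by (intro Min_le) auto
  have finT: "finite T" using finS by (auto simp: T_def)
  have neT: "T \<noteq> {}" using W1 unfolding T_def by force
  define J where "J = Max (snd ` T)"
  have "J \<in> snd ` T" unfolding J_def using finT neT by (intro Max_in) auto
  then obtain p where pT: "p \<in> T" and pJ: "snd p = J" by auto
  have J2: "snd x \<le> J" if "x \<in> T" for x unfolding J_def using finT that by (intro Max_ge) auto
  have "lead l F p"
    unfolding lead_def
  proof (intro conjI allI impI)
    show "F (fst p) (snd p) \<noteq> 0" using pT by (auto simp: T_def S_def)
    fix i j assume ij: "F i j \<noteq> 0"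
    have pw: "wt l (fst p) (snd p) = W" "wt l (fst p) (snd p) \<le> w0" using pT by (auto simp: T_def S_def)
    show "mle l p (i,j)"
    proof (cases "wt l i j \<le> w0")
      case True
      then have "(i,j) \<in> S" using ij by (simp add: S_def)
      then show ?thesis using W2[of "(i,j)"] J2[of "(i,j)"] pw pJ by (auto simp: mle_def T_def)
    next
      case False then show ?thesis using pw by (auto simp: mle_def)
    qed
  qed
  then show ?thesis by blast
qed

definition wlb :: "real \<Rightarrow> bser \<Rightarrow> real \<Rightarrow> bool" where
  "wlb l F A \<longleftrightarrow> (\<forall>i j. F i j \<noteq> 0 \<longrightarrow> A \<le> wt l i j)"

lemma wlb_bmult:
  assumes "wlb l F A" "wlb l G B" shows "wlb l (bmult F G) (A + B)"
  unfolding wlb_def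
proof (intro allI impI)
  fix i j assume "bmult F G i j \<noteq> 0"
  then have "(\<Sum>a\<le>i. \<Sum>b\<le>j. F a b * G (i - a) (j - b)) \<noteq> 0" by (simp add: bmult_def)
  then obtain a where a: "a \<le> i" "(\<Sum>b\<le>j. F a b * G (i - a) (j - b)) \<noteq> 0" using sum_nz by fastforce
  then obtain b where b: "b \<le> j" "F a b * G (i - a) (j - b) \<noteq> 0" using sum_nz by fastforce
  then have "A \<le> wt l a b" "B \<le> wt l (i-a) (j-b)" using assms by (auto simp: wlb_def)
  moreover have "wt l a b + wt l (i-a) (j-b) = wt l i j"
    using a b by (simp add: wt_def of_nat_diff algebra_simps)
  ultimately show "A + B \<le> wt l i j" by linarith
qed

lemma wlb_bpow: "wlb l F A \<Longrightarrow> wlb l (bpow F k) (real k * A)"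
proof (induction k)
  case 0 then show ?case by (simp add: wlb_def bone_def wt_def)
next
  case (Suc k)
  then show ?case using wlb_bmult[OF Suc.prems Suc.IH[OF Suc.prems]] by (simp add: algebra_simps)
qed

lemma wlb_subst:
  assumes "wlb l P A" "wlb l R B" "\<And>u v. g u v \<noteq> 0 \<Longrightarrow> C \<le> real u * A + real v * B"
  shows "wlb l (bsubst g P R) C"
  unfolding wlb_def
proof (intro allI impI)
  fix i j assume "bsubst g P R i j \<noteq> 0"
  then have "(\<Sum>u\<le>i+j. \<Sum>v\<le>i+j. g u v * bmult (bpow P u) (bpow R v) i j) \<noteq> 0" by (simp add: bsubst_def)
  then obtain u where "(\<Sum>v\<le>i+j. g u v * bmult (bpow P u) (bpow R v) i j) \<noteq> 0" using sum_nz by fastforce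
  then obtain v where "g u v * bmult (bpow P u) (bpow R v) i j \<noteq> 0" using sum_nz by fastforce
  then have gg: "g u v \<noteq> 0" and tt: "bmult (bpow P u) (bpow R v) i j \<noteq> 0" by auto
  have "wlb l (bmult (bpow P u) (bpow R v)) (real u * A + real v * B)"
    by (intro wlb_bmult wlb_bpow assms)
  then show "C \<le> wt l i j" using tt assms(3)[OF gg] unfolding wlb_def by force
qed


lemma quad_sub: "q i j \<noteq> 0 \<Longrightarrow> real i \<le> x \<Longrightarrow> real j \<le> y \<Longrightarrow> (x,y) \<in> newton_polygon q"
  unfolding newton_polygon_def by (rule hull_inc) blast

lemma np_convex: "convex (newton_polygon q)"
  unfolding newton_polygon_def by (rule convex_convex_hull)

lemma np_up: assumes "z \<in> newton_polygon q" "0 \<le> t" shows "(fst z, snd z + t) \<in> newton_polygon q"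
proof -
  define V where "V = {z. \<forall>t\<ge>0. (fst z, snd z + t) \<in> newton_polygon q}"
  have "\<Union>{ {(x, y). x \<ge> real i \<and> y \<ge> real j} | i j. q i j \<noteq> 0} \<subseteq> V"
    unfolding V_def by (auto intro!: quad_sub)
  moreover have "convex V"
  proof (rule convexI)
    fix x y u v assume xy: "x \<in> V" "y \<in> V" and uv: "0 \<le> u" "0 \<le> v" "u + v = (1::real)"
    show "u *\<^sub>R x + v *\<^sub>R y \<in> V" unfolding V_def
    proof (intro CollectI allI impI)
      fix t :: real assume t: "0 \<le> t"
      have "(fst x, snd x + t) \<in> newton_polygon q" "(fst y, snd y + t) \<in> newton_polygon q"
        using xy t by (auto simp: V_def)
      from convexD[OF np_convex this uv]
      have "u *\<^sub>R (fst x, snd x + t) + v *\<^sub>R (fst y, snd y + t) \<in> newton_polygon q" .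
      moreover have "u *\<^sub>R (fst x, snd x + t) + v *\<^sub>R (fst y, snd y + t)
          = (fst (u *\<^sub>R x + v *\<^sub>R y), snd (u *\<^sub>R x + v *\<^sub>R y) + t)"
      proof -
        have "u * t + v * t = (u + v) * t" by (simp add: algebra_simps)
        then have "u * t + v * t = t" using uv by simp
        then show ?thesis by (simp add: prod_eq_iff algebra_simps)
      qed
      ultimately show "(fst (u *\<^sub>R x + v *\<^sub>R y), snd (u *\<^sub>R x + v *\<^sub>R y) + t) \<in> newton_polygon q" by simp
    qed
  qed
  ultimately have "newton_polygon q \<subseteq> V" unfolding newton_polygon_def by (rule hull_minimal)
  then show ?thesis using assms by (auto simp: V_def)
qed

lemma np_corner:
  assumes "z extreme_point_of newton_polygon q" shows "\<exists>i j. q i j \<noteq> 0 \<and> z = (real i, real j)"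
proof -
  have "z \<in> \<Union>{ {(x, y). x \<ge> real i \<and> y \<ge> real j} | i j. q i j \<noteq> 0}"
    using assms unfolding newton_polygon_def by (rule extreme_point_of_convex_hull)
  then obtain i j where ij: "q i j \<noteq> 0" "real i \<le> fst z" "real j \<le> snd z" by (cases z) auto
  have ne: "z \<notin> open_segment a b" if "a \<in> newton_polygon q" "b \<in> newton_polygon q" for a b
    using assms that by (auto simp: extreme_point_of_def)
  have x: "fst z = real i"
  proof (rule ccontr)
    assume "fst z \<noteq> real i"
    then have lt: "real i < fst z" using ij by simp
    define a where "a = (real i, snd z)"
    define b where "b = (2 * fst z - real i, snd z)"
    have "a \<in> newton_polygon q" "b \<in> newton_polygon q" unfolding a_def b_def
      using ij lt by (auto intro!: quad_sub)
    moreover have "midpoint a b = z" "a \<noteq> b" using lt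
      by (auto simp: a_def b_def midpoint_def prod_eq_iff)
    ultimately show False using ne midpoint_in_open_segment by metis
  qed
  have y: "snd z = real j"
  proof (rule ccontr)
    assume "snd z \<noteq> real j"
    then have lt: "real j < snd z" using ij by simp
    define a where "a = (fst z, real j)"
    define b where "b = (fst z, 2 * snd z - real j)"
    have "a \<in> newton_polygon q" "b \<in> newton_polygon q" unfolding a_def b_def
      using ij lt by (auto intro!: quad_sub)
    moreover have "midpoint a b = z" "a \<noteq> b" using lt
      by (auto simp: a_def b_def midpoint_def prod_eq_iff)
    ultimately show False using ne midpoint_in_open_segment by metis
  qed
  show ?thesis using ij x y by (intro exI[of _ i] exI[of _ j]) (simp add: prod_eq_iff)
qed

lemma lead_extreme:
  assumes l: "l > 0" and L: "lead l q (u0,v0)"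
  shows "(real u0, real v0) extreme_point_of newton_polygon q"
proof -
  define c where "c = wt l u0 v0"
  define f where "f z = fst z + l * snd z" for z :: "real \<times> real"
  define H where "H = {z. c < f z \<or> (f z = c \<and> snd z \<le> real v0)}"
  have fadd: "f (u *\<^sub>R x + v *\<^sub>R y) = u * f x + v * f y" for u v x y
    by (simp add: f_def algebra_simps)
  have "\<Union>{ {(x, y). x \<ge> real i \<and> y \<ge> real j} | i j. q i j \<noteq> 0} \<subseteq> H"
  proof
    fix z assume "z \<in> \<Union>{ {(x, y). x \<ge> real i \<and> y \<ge> real j} | i j. q i j \<noteq> 0}"
    then obtain i j where ij: "q i j \<noteq> 0" "real i \<le> fst z" "real j \<le> snd z" by (cases z) auto
    have m: "mle l (u0,v0) (i,j)" using L ij by (auto simp: lead_def)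
    have "l * real j \<le> l * snd z" using l ij by simp
    then have fz: "wt l i j \<le> f z" using ij by (simp add: f_def wt_def)
    have "l * real j < l * snd z" if "real j < snd z" using l that by simp
    then have fz2: "wt l i j < f z" if "real j < snd z" using ij that by (simp add: f_def wt_def)
    show "z \<in> H" using m fz fz2 unfolding H_def mle_def c_def
      by (cases "real j < snd z") auto
  qed
  moreover have "convex H"
  proof (rule convexI)
    fix x y u v assume xy: "x \<in> H" "y \<in> H" and uv: "0 \<le> u" "0 \<le> v" "u + v = (1::real)"
    show "u *\<^sub>R x + v *\<^sub>R y \<in> H"
    proof (cases "u = 0 \<or> v = 0")
      case True then show ?thesis using xy uv by auto
    next
      case False
      then have up: "u > 0" "v > 0" using uv by auto
      have fx: "c \<le> f x" "c \<le> f y" using xy by (auto simp: H_def)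
      show ?thesis
      proof (cases "c < f x \<or> c < f y")
        case True
        have "u * c \<le> u * f x" "v * c \<le> v * f y" using fx up by simp_all
        moreover have "u * c < u * f x \<or> v * c < v * f y" using True up by auto
        ultimately have "u * c + v * c < u * f x + v * f y" by linarith
        then have "c < f (u *\<^sub>R x + v *\<^sub>R y)" using uv fadd by (metis distrib_right mult_1)
        then show ?thesis by (simp add: H_def)
      next
        case False
        then have e: "f x = c" "f y = c" using fx by auto
        then have s: "snd x \<le> real v0" "snd y \<le> real v0" using xy by (auto simp: H_def)
        have "f (u *\<^sub>R x + v *\<^sub>R y) = c" using e fadd uv by (metis distrib_right mult_1)
        moreover have "u * snd x + v * snd y \<le> u * real v0 + v * real v0"
          using s up by (intro add_mono mult_left_mono) auto
        ultimately show ?thesis using uv by (simp add: H_def) (metis distrib_right mult_1)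
      qed
    qed
  qed
  ultimately have NH: "newton_polygon q \<subseteq> H" unfolding newton_polygon_def by (rule hull_minimal)
  have Lin: "(real u0, real v0) \<in> newton_polygon q" using L by (intro quad_sub) (auto simp: lead_def)
  show ?thesis unfolding extreme_point_of_def
  proof (intro conjI Lin ballI)
    fix a b assume ab: "a \<in> newton_polygon q" "b \<in> newton_polygon q"
    show "(real u0, real v0) \<notin> open_segment a b"
    proof
      assume "(real u0, real v0) \<in> open_segment a b"
      then obtain t where t: "a \<noteq> b" "0 < t" "t < 1" "(real u0, real v0) = (1 - t) *\<^sub>R a + t *\<^sub>R b"
        unfolding in_segment by auto
      have aH: "a \<in> H" "b \<in> H" using ab NH by auto
      have fL: "f (real u0, real v0) = c" by (simp add: f_def c_def wt_def)
      have fc: "c = (1-t) * f a + t * f b" using fL t(4) fadd by metis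
      have fa: "c \<le> f a" "c \<le> f b" using aH by (auto simp: H_def)
      have "(1-t) * c \<le> (1-t) * f a" "t * c \<le> t * f b" using fa t by simp_all
      have fe: "f a = c \<and> f b = c"
      proof (rule ccontr)
        assume "\<not> (f a = c \<and> f b = c)"
        then have "(1-t) * c < (1-t) * f a \<or> t * c < t * f b" using fa t by auto
        then have "(1-t) * c + t * c < (1-t) * f a + t * f b"
          using \<open>(1-t) * c \<le> (1-t) * f a\<close> \<open>t * c \<le> t * f b\<close> by linarith
        then show False using fc by (simp add: algebra_simps)
      qed
      then have sn: "snd a \<le> real v0" "snd b \<le> real v0" using aH by (auto simp: H_def)
      have sv: "real v0 = (1-t) * snd a + t * snd b" using t(4) by (simp add: prod_eq_iff)
      have "snd a = real v0 \<and> snd b = real v0"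
      proof (rule ccontr)
        assume "\<not> (snd a = real v0 \<and> snd b = real v0)"
        then have "(1-t) * snd a < (1-t) * real v0 \<or> t * snd b < t * real v0" using sn t by auto
        moreover have "(1-t) * snd a \<le> (1-t) * real v0" "t * snd b \<le> t * real v0" using sn t by simp_all
        ultimately have "(1-t) * snd a + t * snd b < (1-t) * real v0 + t * real v0" by linarith
        then show False using sv by (simp add: algebra_simps)
      qed
      then have "a = b" using fe by (auto simp: f_def prod_eq_iff)
      then show False using t by simp
    qed
  qed
qed

lemma not_extreme_A:
  assumes A: "A extreme_point_of newton_polygon q" and L: "L \<in> newton_polygon q" and B: "B \<in> newton_polygon q"
    and o1: "fst L < fst A" and o2: "fst A < fst B" and B0: "snd B = 0"
    and l: "l > 0" and fA: "fst A + l * snd A = fst B" and fL: "fst L + l * snd L < fst B"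
  shows False
proof -
  define \<theta> where "\<theta> = (fst A - fst L) / (fst B - fst L)"
  have th: "0 \<le> \<theta>" "\<theta> \<le> 1" "\<theta> < 1" using o1 o2 by (auto simp: \<theta>_def divide_simps)
  define Z where "Z = (1 - \<theta>) *\<^sub>R L + \<theta> *\<^sub>R B"
  have ZN: "Z \<in> newton_polygon q" unfolding Z_def using np_convex L B th by (intro convexD_alt) auto
  have te: "\<theta> * (fst B - fst L) = fst A - fst L" using o1 o2 by (simp add: \<theta>_def)
  have "fst Z = fst L + \<theta> * (fst B - fst L)" by (simp add: Z_def algebra_simps)
  then have zx: "fst Z = fst A" using te by simp
  have zy: "snd Z = (1 - \<theta>) * snd L" using B0 by (simp add: Z_def)
  have "(1 - \<theta>) * (fst L + l * snd L) < (1 - \<theta>) * fst B" using fL th by simp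
  then have "fst Z + l * snd Z < fst B"
    using zx zy B0 by (simp add: Z_def algebra_simps)
  then have "l * snd Z < l * snd A" using fA zx by linarith
  then have lt: "snd Z < snd A" using l by simp
  define Z' where "Z' = (fst Z, snd Z + 2 * (snd A - snd Z))"
  have Z'N: "Z' \<in> newton_polygon q" unfolding Z'_def using np_up[OF ZN, of "2 * (snd A - snd Z)"] lt by simp
  have "midpoint Z Z' = A" "Z \<noteq> Z'" using zx lt by (auto simp: Z'_def midpoint_def prod_eq_iff)
  then show False using A ZN Z'N midpoint_in_open_segment unfolding extreme_point_of_def by metis
qed


lemma chain_less:
  assumes mono: "\<And>k. 1 \<le> k \<Longrightarrow> k < s \<Longrightarrow> (ns::nat\<Rightarrow>nat) k < ns (Suc k)"
  shows "1 \<le> k \<Longrightarrow> k + m + 1 \<le> s \<Longrightarrow> ns k < ns (k + m + 1)"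
proof (induction m)
  case 0 then show ?case using mono by simp
next
  case (Suc m)
  then have "ns k < ns (k + m + 1)" by simp
  moreover have "ns (k + m + 1) < ns (Suc (k + m + 1))" using Suc.prems by (intro mono) auto
  ultimately show ?case by simp
qed

lemma wt_comb: "wt l (fst (padd (psc u p) (psc v r))) (snd (padd (psc u p) (psc v r)))
   = real u * wt l (fst p) (snd p) + real v * wt l (fst r) (snd r)"
  by (simp add: wt_def padd_def psc_def algebra_simps)

lemma skew_suc:
  "fst (skew_iter a q (Suc n)) = bsubst (zser a) (fst (skew_iter a q n)) (snd (skew_iter a q n))"
  "snd (skew_iter a q (Suc n)) = bsubst q (fst (skew_iter a q n)) (snd (skew_iter a q n))"
  by (simp_all add: Let_def split_beta)

lemma lead_bZ: "lead l bZ (1,0)" by (simp add: lead_def bZ_def mle_def)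
lemma lead_bW: "lead l bW (0,1)" by (simp add: lead_def bW_def mle_def)

theorem theorem4p1:
  fixes a :: "nat \<Rightarrow> complex" and q :: bser and \<delta> :: nat
    and s :: nat and ns ms :: "nat \<Rightarrow> nat"
  assumes p_conv: "\<exists>r>0. summable (\<lambda>i. norm (a i) * r ^ i)"
    and q_conv: "\<exists>r>0. (\<lambda>(i, j). norm (q i j) * r ^ (i + j)) summable_on (UNIV :: (nat \<times> nat) set)"
    and delta_ge: "\<delta> \<ge> 1"
    and a_low: "\<And>i. i < \<delta> \<Longrightarrow> a i = 0"
    and a_delta: "a \<delta> \<noteq> 0"
    and q_00: "q 0 0 = 0"
    and q_nz: "\<exists>i j. q i j \<noteq> 0"
    and ns_mono: "\<And>k. 1 \<le> k \<Longrightarrow> k < s \<Longrightarrow> ns k < ns (Suc k)"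
    and ms_mono: "\<And>k. 1 \<le> k \<Longrightarrow> k < s \<Longrightarrow> ms k > ms (Suc k)"
    and vertices: "{(real (ns k), real (ms k)) | k. 1 \<le> k \<and> k \<le> s}
                     = {v. v extreme_point_of newton_polygon q}"
    and s_gt: "s > 1"
    and case2: "real \<delta> \<le> y_intercept (ns (s-1)) (ms (s-1)) (ns s) (ms s)"
    and d0: "ms s = 0"
  shows "\<delta> > ms s \<and>
    (let \<gamma> = ns s; d = ms s;
         l1 = (real (ns s) - real (ns (s-1))) / (real (ms (s-1)) - real (ms s));
         \<alpha> = real \<gamma> / (real \<delta> - real d)
     in (\<forall>n\<ge>1. Qit a q n \<noteq> (\<lambda>i j. 0) \<and> gamma_n \<gamma> \<delta> d n = \<gamma> * \<delta> ^ (n - 1) \<and>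
                (\<forall>l\<in>{l1..\<alpha>}. wl l (Qit a q n) = real (gamma_n \<gamma> \<delta> d n))) \<and>
        (real \<delta> = y_intercept (ns (s-1)) (ms (s-1)) (ns s) (ms s) \<longrightarrow>
           {l1..\<alpha>} = {l1} \<and> (\<forall>n\<ge>1. wl l1 (Qit a q n) = real (gamma_n \<gamma> \<delta> d n))))"
proof -
  define \<gamma> where "\<gamma> = ns s"
  define n1 where "n1 = ns (s-1)"
  define m1 where "m1 = ms (s-1)"
  define l1 where "l1 = (real \<gamma> - real n1) / real m1"
  define \<alpha> where "\<alpha> = real \<gamma> / real \<delta>"
  define T where "T = y_intercept (ns (s-1)) (ms (s-1)) (ns s) (ms s)"
  have ss: "Suc (s-1) = s" "1 \<le> s-1" "s-1 < s" using s_gt by auto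
  have n1g: "n1 < \<gamma>" using ns_mono[OF ss(2,3)] ss(1) by (simp add: n1_def \<gamma>_def)
  have m1p: "0 < m1" using ms_mono[OF ss(2,3)] ss(1) d0 by (simp add: m1_def)
  have dp: "real \<delta> > 0" using delta_ge by simp
  have l1p: "l1 > 0" using n1g m1p by (simp add: l1_def)
  have Te: "T = real m1 * real \<gamma> / (real \<gamma> - real n1)"
    using n1g d0 by (simp add: T_def y_intercept_def m1_def n1_def \<gamma>_def field_simps)
  have l1a: "l1 \<le> \<alpha>"
  proof -
    have "real \<delta> * (real \<gamma> - real n1) \<le> real m1 * real \<gamma>"
      using case2 Te n1g unfolding T_def[symmetric] by (simp add: field_simps)
    then show ?thesis using n1g m1p dp by (simp add: l1_def \<alpha>_def field_simps)
  qed
  have l1eq: "l1 = \<alpha>" if "real \<delta> = T"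
  proof -
    have "real \<delta> * (real \<gamma> - real n1) = real m1 * real \<gamma>"
      using that Te n1g by (simp add: field_simps)
    then show ?thesis using n1g m1p dp by (simp add: l1_def \<alpha>_def field_simps)
  qed
  have edge: "real n1 + l1 * real m1 = real \<gamma>"
  proof -
    have "real m1 \<noteq> 0" using m1p by simp
    then have "l1 * real m1 = real \<gamma> - real n1" unfolding l1_def by simp
    then show ?thesis by simp
  qed
  have Aext: "(real n1, real m1) extreme_point_of newton_polygon q"
  proof -
    have "(real n1, real m1) \<in> {(real (ns k), real (ms k)) | k. 1 \<le> k \<and> k \<le> s}"
      unfolding n1_def m1_def mem_Collect_eq using ss by (intro exI[of _ "s-1"]) simp
    then have "(real n1, real m1) \<in> {v. v extreme_point_of newton_polygon q}" by (simp only: vertices)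
    then show ?thesis by simp
  qed
  have Bext: "(real \<gamma>, 0) extreme_point_of newton_polygon q"
  proof -
    have "(real (ns s), real (ms s)) \<in> {(real (ns k), real (ms k)) | k. 1 \<le> k \<and> k \<le> s}"
      unfolding mem_Collect_eq using s_gt by (intro exI[of _ "s"]) simp
    then have "(real (ns s), real (ms s)) \<in> {v. v extreme_point_of newton_polygon q}" by (simp only: vertices)
    then show ?thesis using d0 by (simp add: \<gamma>_def)
  qed
  have qg: "q \<gamma> 0 \<noteq> 0"
  proof -
    obtain i j where "q i j \<noteq> 0" "(real \<gamma>, 0::real) = (real i, real j)" using np_corner[OF Bext] by blast
    then show ?thesis by simp
  qed
  have N2: "real \<gamma> \<le> real u + l1 * real v" if quv: "q u v \<noteq> 0" for u v
  proof (rule ccontr)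
    assume "\<not> real \<gamma> \<le> real u + l1 * real v"
    then have lt: "wt l1 u v < real \<gamma>" by (simp add: wt_def)
    obtain L0 where L0: "lead l1 q L0" using lead_exists[of l1 q u v, OF l1p quv] by blast
    obtain u0 v0 where L0e: "L0 = (u0,v0)" by (cases L0)
    have "mle l1 L0 (u,v)" using L0 quv by (auto simp: lead_def)
    then have lt0: "wt l1 u0 v0 < real \<gamma>" using lt L0e by (auto simp: mle_def)
    have ext: "(real u0, real v0) extreme_point_of newton_polygon q"
      using lead_extreme[OF l1p] L0 L0e by simp
    then have "(real u0, real v0) \<in> {(real (ns k), real (ms k)) | k. 1 \<le> k \<and> k \<le> s}"
      by (simp only: vertices mem_Collect_eq)
    then obtain k where k: "1 \<le> k" "k \<le> s" "(real u0, real v0) = (real (ns k), real (ms k))"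
      by blast
    then have uk: "u0 = ns k" "v0 = ms k" by auto
    have "k \<noteq> s" using lt0 uk d0 by (auto simp: wt_def \<gamma>_def)
    moreover have "k \<noteq> s - 1" using lt0 uk edge by (auto simp: wt_def n1_def m1_def)
    ultimately have eqk: "k + (s - 1 - k - 1) + 1 = s - 1" using k by auto
    have "ns k < ns (k + (s - 1 - k - 1) + 1)"
      by (rule chain_less[of s ns, OF ns_mono]) (use k eqk in auto)
    then have "ns k < n1" unfolding n1_def by (simp only: eqk)
    have Lin: "(real u0, real v0) \<in> newton_polygon q" using ext by (simp add: extreme_point_of_def)
    have Bin: "(real \<gamma>, 0) \<in> newton_polygon q" using Bext by (simp add: extreme_point_of_def)
    show False
      apply (rule not_extreme_A[OF Aext Lin Bin _ _ _ l1p])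
      using \<open>ns k < n1\<close> uk n1g edge lt0 by (auto simp: wt_def)
  qed
  have ap: "\<alpha> > 0" using n1g dp by (simp add: \<alpha>_def)
  have N2a: "real \<gamma> \<le> real u + \<alpha> * real v" if "q u v \<noteq> 0" for u v
  proof -
    have "l1 * real v \<le> \<alpha> * real v" using l1a by (simp add: mult_right_mono)
    then show ?thesis using N2[OF that] by linarith
  qed
  obtain L where L: "lead \<alpha> q L" using lead_exists[of \<alpha> q \<gamma> 0, OF ap qg] by blast
  obtain us vs where Le: "L = (us, vs)" by (cases L)
  have qL: "q us vs \<noteq> 0" using L Le by (simp add: lead_def)
  have wL: "wt \<alpha> us vs = real \<gamma>"
  proof -
    have "mle \<alpha> L (\<gamma>, 0)" using L qg by (simp add: lead_def)
    then have "wt \<alpha> us vs \<le> real \<gamma>" using Le by (auto simp: mle_def wt_def)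
    then show ?thesis using N2a[OF qL] by (simp add: wt_def)
  qed
  have L1: "1 \<le> us + vs" using qL q_00 by (cases us; cases vs) auto
  define Pn where "Pn n = fst (skew_iter a q n)" for n
  define Rn where "Rn n = snd (skew_iter a q n)" for n
  have PS: "Pn (Suc n) = bsubst (zser a) (Pn n) (Rn n)" for n unfolding Pn_def Rn_def by (rule skew_suc)
  have RS: "Rn (Suc n) = bsubst q (Pn n) (Rn n)" for n unfolding Pn_def Rn_def by (rule skew_suc)
  have P0: "Pn 0 = bZ" "Rn 0 = bW" by (simp_all add: Pn_def Rn_def)
  have J: "lead \<alpha> (Pn n) (\<delta>^n, 0) \<and> (\<exists>r. lead \<alpha> (Rn n) r \<and> 1 \<le> fst r + snd r \<and>
     (n = 0 \<longrightarrow> r = (0,1)) \<and>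
     (n \<ge> 1 \<longrightarrow> snd r = vs^n \<and> wt \<alpha> (fst r) (snd r) = real \<gamma> * real \<delta>^(n-1)))" for n
  proof (induction n)
    case 0 then show ?case using P0 lead_bZ lead_bW by auto
  next
    case (Suc n)
    obtain r where r: "lead \<alpha> (Rn n) r" "1 \<le> fst r + snd r" "n = 0 \<longrightarrow> r = (0,1)"
       "n \<ge> 1 \<longrightarrow> snd r = vs^n \<and> wt \<alpha> (fst r) (snd r) = real \<gamma> * real \<delta>^(n-1)"
      using Suc.IH by blast
    have Pl: "lead \<alpha> (Pn n) (\<delta>^n, 0)" using Suc.IH by blast
    have dn: "1 \<le> \<delta>^n" using delta_ge by simp
    have wp: "wt \<alpha> (\<delta>^n) 0 = real \<delta>^n" by (simp add: wt_def)
    have newP: "lead \<alpha> (Pn (Suc n)) (\<delta>^Suc n, 0)"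
    proof -
      have "lead \<alpha> (bsubst (zser a) (Pn n) (Rn n)) (padd (psc \<delta> (\<delta>^n, 0)) (psc 0 r))"
      proof (rule lead_subst[OF Pl r(1) _ r(2)])
        show "1 \<le> fst (\<delta>^n, 0::nat) + snd (\<delta>^n, 0::nat)" using dn by simp
        show "zser a \<delta> 0 \<noteq> 0" using a_delta by (simp add: zser_def)
        fix u v assume uv: "zser a u v \<noteq> 0" "(u,v) \<noteq> (\<delta>, 0)"
        then have v0: "v = 0" and au: "a u \<noteq> 0" by (auto simp: zser_def split: if_splits)
        then have "\<delta> \<le> u" using a_low not_le by blast
        then have ud: "\<delta> < u" using uv v0 by auto
        have "real \<delta> * real \<delta>^n < real u * real \<delta>^n" by (intro mult_strict_right_mono) (use ud dp in auto)
        then show "mle \<alpha> (padd (psc \<delta> (\<delta>^n, 0)) (psc 0 r)) (padd (psc u (\<delta>^n, 0)) (psc v r)) \<and>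
          padd (psc u (\<delta>^n, 0)) (psc v r) \<noteq> padd (psc \<delta> (\<delta>^n, 0)) (psc 0 r)"
          using v0 delta_ge by (auto simp: mle_def wt_def padd_def psc_def)
      qed
      moreover have "padd (psc \<delta> (\<delta>^n, 0)) (psc 0 r) = (\<delta>^Suc n, 0)" by (simp add: padd_def psc_def)
      ultimately show ?thesis using PS by simp
    qed
    define p where "p = (\<delta>^n, 0::nat)"
    have p1: "1 \<le> fst p + snd p" using dn by (simp add: p_def)
    have Pl': "lead \<alpha> (Pn n) p" using Pl by (simp add: p_def)
    have Mform: "lead \<alpha> (Rn (Suc n)) (padd (psc us p) (psc vs r))"
      unfolding RS
    proof (rule lead_subst[of \<alpha> "Pn n" p "Rn n" r q us vs, OF Pl' r(1) p1 r(2) qL])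
      fix u v assume uv: "q u v \<noteq> 0" "(u,v) \<noteq> (us, vs)"
      have m: "mle \<alpha> (us,vs) (u,v)" using L Le uv by (auto simp: lead_def)
      show "mle \<alpha> (padd (psc us p) (psc vs r)) (padd (psc u p) (psc v r)) \<and>
          padd (psc u p) (psc v r) \<noteq> padd (psc us p) (psc vs r)"
      proof (cases "n = 0")
        case True
        then have "r = (0,1)" "p = (1,0)" using r(3) by (auto simp: p_def)
        then show ?thesis using m uv by (simp add: padd_def psc_def)
      next
        case False
        then have rr: "snd r = vs^n" "wt \<alpha> (fst r) (snd r) = real \<gamma> * real \<delta>^(n-1)" using r(4) by auto
        have ge: "real \<gamma> * real \<delta>^(n-1) = \<alpha> * real \<delta>^n"
          using False dp by (cases n) (auto simp: \<alpha>_def)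
        have wV: "wt \<alpha> (fst (padd (psc x p) (psc y r))) (snd (padd (psc x p) (psc y r)))
            = real \<delta>^n * wt \<alpha> x y" for x y
          unfolding wt_comb using rr ge by (simp add: p_def wt_def algebra_simps)
        have sV: "snd (padd (psc x p) (psc y r)) = y * vs^n" for x y
          using rr by (simp add: p_def padd_def psc_def)
        have dnp: "real \<delta>^n > 0" using dp by simp
        show ?thesis
        proof (cases "wt \<alpha> us vs < wt \<alpha> u v")
          case True
          then have "real \<delta>^n * wt \<alpha> us vs < real \<delta>^n * wt \<alpha> u v" using dnp by simp
          moreover have "padd (psc u p) (psc v r) \<noteq> padd (psc us p) (psc vs r)"
          proof
            assume eq: "padd (psc u p) (psc v r) = padd (psc us p) (psc vs r)"
            have "real \<delta>^n * wt \<alpha> u v = real \<delta>^n * wt \<alpha> us vs" using wV[of u v] wV[of us vs] eq by metis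
            then show False using calculation by linarith
          qed
          ultimately show ?thesis unfolding mle_def wV by auto
        next
          case False
          then have we: "wt \<alpha> us vs = wt \<alpha> u v" and vle: "v \<le> vs" using m by (auto simp: mle_def)
          have "v \<noteq> vs"
          proof
            assume "v = vs"
            then have "u = us" using we by (simp add: wt_def)
            then show False using uv \<open>v = vs\<close> by simp
          qed
          then have vl: "v < vs" using vle by simp
          then have "0 < vs^n" by simp
          then have "v * vs^n < vs * vs^n" using vl by simp
          then have slt: "snd (padd (psc u p) (psc v r)) < snd (padd (psc us p) (psc vs r))" by (simp only: sV)
          have weq: "wt \<alpha> (fst (padd (psc u p) (psc v r))) (snd (padd (psc u p) (psc v r)))
             = wt \<alpha> (fst (padd (psc us p) (psc vs r))) (snd (padd (psc us p) (psc vs r)))"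
            by (simp only: wV we)
          show ?thesis unfolding mle_def using slt weq by auto
        qed
      qed
    qed
    define r' where "r' = padd (psc us p) (psc vs r)"
    have r'1: "1 \<le> fst r' + snd r'"
    proof -
      have "fst r' + snd r' = us * (fst p + snd p) + vs * (fst r + snd r)"
        by (simp add: r'_def padd_def psc_def algebra_simps)
      moreover have "us \<le> us * (fst p + snd p)" "vs \<le> vs * (fst r + snd r)" using p1 r(2) by simp_all
      ultimately show ?thesis using L1 by linarith
    qed
    have r'2: "snd r' = vs^Suc n \<and> wt \<alpha> (fst r') (snd r') = real \<gamma> * real \<delta>^(Suc n - 1)"
    proof (cases "n = 0")
      case True
      then have "r = (0,1)" "p = (1,0)" using r(3) by (auto simp: p_def)
      then show ?thesis using True wL by (simp add: r'_def padd_def psc_def)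
    next
      case False
      then have rr: "snd r = vs^n" "wt \<alpha> (fst r) (snd r) = real \<gamma> * real \<delta>^(n-1)" using r(4) by auto
      have ge: "real \<gamma> * real \<delta>^(n-1) = \<alpha> * real \<delta>^n"
        using False dp by (cases n) (auto simp: \<alpha>_def)
      have "wt \<alpha> (fst r') (snd r') = real \<delta>^n * wt \<alpha> us vs"
        unfolding r'_def wt_comb using rr ge by (simp add: p_def wt_def algebra_simps)
      then show ?thesis using wL rr by (simp add: r'_def padd_def psc_def p_def algebra_simps)
    qed
    show ?case using newP Mform r'1 r'2 unfolding r'_def[symmetric] by (intro conjI exI[of _ r']) auto
  qed
  have LBP: "wlb l (Pn n) (real \<delta>^n)" if l0: "0 \<le> l" for n l
  proof (induction n)
    case 0 then show ?case using P0 by (simp add: wlb_def bZ_def wt_def)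
  next
    case (Suc n)
    have R0: "wlb l (Rn n) 0" using l0 by (simp add: wlb_def wt_def)
    have "wlb l (bsubst (zser a) (Pn n) (Rn n)) (real \<delta>^Suc n)"
    proof (rule wlb_subst[OF Suc.IH R0])
      fix u v assume "zser a u v \<noteq> 0"
      then have "v = 0" "a u \<noteq> 0" by (auto simp: zser_def split: if_splits)
      then have "\<delta> \<le> u" using a_low not_le by blast
      then have "real \<delta> * real \<delta>^n \<le> real u * real \<delta>^n" by (simp add: mult_right_mono)
      then show "real \<delta>^Suc n \<le> real u * real \<delta>^n + real v * 0" by simp
    qed
    then show ?case using PS by simp
  qed
  have LBR: "wlb l (Rn (Suc n)) (real \<gamma> * real \<delta>^n)" if l: "l1 \<le> l" "l \<le> \<alpha>" for n l
  proof -
    have l0: "0 \<le> l" using l l1p by simp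
    have N2l: "real \<gamma> \<le> real u + l * real v" if "q u v \<noteq> 0" for u v
    proof -
      have "l1 * real v \<le> l * real v" using l by (simp add: mult_right_mono)
      then show ?thesis using N2[OF that] by linarith
    qed
    show ?thesis
    proof (induction n)
      case 0
      have "wlb l bZ 1" "wlb l bW l" by (simp_all add: wlb_def bZ_def bW_def wt_def)
      then have "wlb l (bsubst q bZ bW) (real \<gamma>)"
        by (rule wlb_subst) (use N2l in \<open>auto simp: mult.commute\<close>)
      then show ?case using RS P0 by simp
    next
      case (Suc n)
      have ge: "real \<gamma> * real \<delta>^n = \<alpha> * real \<delta>^Suc n" using dp by (simp add: \<alpha>_def)
      have "wlb l (bsubst q (Pn (Suc n)) (Rn (Suc n))) (real \<gamma> * real \<delta>^Suc n)"
      proof (rule wlb_subst[OF LBP[OF l0] Suc.IH])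
        fix u v assume "q u v \<noteq> 0"
        then have "real \<gamma> \<le> real u + \<alpha> * real v" by (rule N2a)
        then have "real \<delta>^Suc n * real \<gamma> \<le> real \<delta>^Suc n * (real u + \<alpha> * real v)"
          using dp by (intro mult_left_mono) auto
        then show "real \<gamma> * real \<delta>^Suc n \<le> real u * real \<delta>^Suc n + real v * (real \<gamma> * real \<delta>^n)"
          unfolding ge by (simp add: algebra_simps)
      qed
      then show ?case using RS by simp
    qed
  qed
  have main: "Rn n \<noteq> (\<lambda>i j. 0) \<and> (\<forall>l\<in>{l1..\<alpha>}. wl l (Rn n) = real \<gamma> * real \<delta>^(n-1))" if n1: "n \<ge> 1" for n
  proof -
    obtain m where nm: "n = Suc m" using n1 by (cases n) auto
    obtain r where r: "lead \<alpha> (Rn n) r" "snd r = vs^n" "wt \<alpha> (fst r) (snd r) = real \<gamma> * real \<delta>^(n-1)"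
      using J[of n] n1 by blast
    have nz: "Rn n (fst r) (snd r) \<noteq> 0" using r(1) by (simp add: lead_def)
    have "wl l (Rn n) = real \<gamma> * real \<delta>^(n-1)" if l: "l1 \<le> l" "l \<le> \<alpha>" for l
    proof -
      have lb: "wlb l (Rn n) (real \<gamma> * real \<delta>^(n-1))" using LBR[OF l, of m] nm by simp
      have "wt l (fst r) (snd r) \<le> wt \<alpha> (fst r) (snd r)" using l by (simp add: wt_def mult_right_mono)
      moreover have "real \<gamma> * real \<delta>^(n-1) \<le> wt l (fst r) (snd r)" using lb nz by (simp add: wlb_def)
      ultimately have eq: "wt l (fst r) (snd r) = real \<gamma> * real \<delta>^(n-1)" using r(3) by linarith
      show ?thesis unfolding wl_def
      proof (rule cInf_eq_minimum)
        show "real \<gamma> * real \<delta>^(n-1) \<in> {real i + l * real j |i j. Rn n i j \<noteq> 0}"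
          apply (simp only: mem_Collect_eq) apply (rule exI[of _ "fst r"], rule exI[of _ "snd r"]) using eq nz by (simp add: wt_def)
        fix x assume "x \<in> {real i + l * real j |i j. Rn n i j \<noteq> 0}"
        then show "real \<gamma> * real \<delta>^(n-1) \<le> x" using lb by (auto simp: wlb_def wt_def)
      qed
    qed
    moreover have "Rn n \<noteq> (\<lambda>i j. 0)" using nz by auto
    ultimately show ?thesis by auto
  qed
  have gn: "gamma_n \<gamma> \<delta> 0 n = \<gamma> * \<delta>^(n-1)" if nge: "n \<ge> 1" for n
  proof -
    obtain m where nm: "n = Suc m" using nge by (cases n) auto
    have "(\<Sum>k<Suc m. \<delta> ^ (Suc m - 1 - k) * 0 ^ k) = \<delta>^m"
      by (subst sum.lessThan_Suc_shift) simp
    then show ?thesis by (simp add: gamma_n_def nm)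
  qed
  have Q: "Qit a q n = Rn n" for n by (simp add: Qit_def Rn_def)
  have part1: "\<forall>n\<ge>1. Qit a q n \<noteq> (\<lambda>i j. 0) \<and> gamma_n \<gamma> \<delta> 0 n = \<gamma> * \<delta> ^ (n - 1) \<and>
                (\<forall>l\<in>{l1..\<alpha>}. wl l (Qit a q n) = real (gamma_n \<gamma> \<delta> 0 n))"
    using main gn Q by simp
  have part2: "real \<delta> = T \<longrightarrow> {l1..\<alpha>} = {l1} \<and> (\<forall>n\<ge>1. wl l1 (Qit a q n) = real (gamma_n \<gamma> \<delta> 0 n))"
    using part1 l1eq l1a by auto
  have ld: "(real (ns s) - real (ns (s-1))) / (real (ms (s-1)) - real (ms s)) = l1"
    by (simp add: l1_def \<gamma>_def n1_def m1_def d0)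
  have ad: "real \<gamma> / (real \<delta> - real (0::nat)) = \<alpha>" by (simp add: \<alpha>_def)
  have g0: "0 < \<delta>" using delta_ge by simp
  have ld2: "(real \<gamma> - real (ns (s - 1))) / (real (ms (s - 1)) - real (0::nat)) = l1"
    by (simp add: l1_def n1_def m1_def)
  have T2: "y_intercept (real (ns (s - 1))) (real (ms (s - 1))) (real \<gamma>) (real (0::nat)) = T"
    by (simp add: T_def d0 \<gamma>_def)
  show ?thesis
    unfolding Let_def d0 \<gamma>_def[symmetric] ad ld2 T2
    by (intro conjI g0 part1 part2)
qed

end
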